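(* Let $\mathcal C = (\mathcal X, \Sigma, \mathcal F)$ be a string constraint problem as described in the context. For every variable $x \in \mathcal X$ and every assignment $\rho$ to $\mathcal X$, the valid domain $V^\rho_x$ is a regular language over $\Sigma$.
   Context: A string constraint problem is a triple $\mathcal C = (\mathcal X, \Sigma, \mathcal F)$, where $\mathcal X = \{x_1,\ldots,x_n\}$ is a finite set of variables, $\Sigma$ is a finite alphabet, and $\mathcal F = \{f_1,\ldots,f_o\}$ is a finite set of formulas generated by the grammar $f ::= f \lor f \mid \lnot f \mid \mathrm{match}(x,\alpha)$, where $x \in \mathcal X$ and $\alpha$ is a regular expression over $\Sigma$. An assignment $\rho$ to $\mathcal X$ maps each $x_i$ to a string $\rho(x_i) \in \Sigma^*$. The atom $\mathrm{match}(x,\alpha)$ is true under $\rho$ iff $\rho(x) \in L(\alpha)$, the language of $\alpha$; $\lor$ and $\lnot$ have their usual boolean meaning. The solution set is $sol(\mathcal C) = \{\rho \mid \rho \models f \text{ for all } f \in \mathcal F\}$. For assignments $\rho,\rho'$ to $\mathcal X$, their concatenation is the assignment $\rho\rho'$ with $(\rho\rho')(x_j) = \rho(x_j)\rho'(x_j)$ for all $j$. The valid domain of $x_i$ relative to $\rho$ is $V^\rho_{x_i} = \{ w \in \Sigma^* \mid \exists \rho' : \rho'(x_i) = w \land \rho\rho' \in sol(\mathcal C)\}$, where $\rho'$ ranges over assignments to $\mathcal X$. *)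

theory Defs
  imports Main
begin

datatype 'a rexp =
    Zero
  | One
  | Atom 'a
  | Plus "'a rexp" "'a rexp"
  | Times "'a rexp" "'a rexp"
  | Star "'a rexp"

definition conc :: "'a list set \<Rightarrow> 'a list set \<Rightarrow> 'a list set" where
  "conc A B = {u @ v | u v. u \<in> A \<and> v \<in> B}"

inductive_set star :: "'a list set \<Rightarrow> 'a list set" for A where
  star_Nil: "[] \<in> star A"
| star_app: "u \<in> A \<Longrightarrow> v \<in> star A \<Longrightarrow> u @ v \<in> star A"

fun lang :: "'a rexp \<Rightarrow> 'a list set" where
  "lang Zero = {}"
| "lang One = {[]}"
| "lang (Atom a) = {[a]}"
| "lang (Plus r s) = lang r \<union> lang s"
| "lang (Times r s) = conc (lang r) (lang s)"
| "lang (Star r) = star (lang r)"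

definition regular_over :: "'a set \<Rightarrow> 'a list set \<Rightarrow> bool" where
  "regular_over Sig L \<longleftrightarrow> (\<exists>r. set_rexp r \<subseteq> Sig \<and> lang r = L)"

datatype ('v, 'a) sformula =
    Match 'v "'a rexp"
  | Or "('v, 'a) sformula" "('v, 'a) sformula"
  | Not "('v, 'a) sformula"

fun sat :: "('v \<Rightarrow> 'a list) \<Rightarrow> ('v, 'a) sformula \<Rightarrow> bool" where
  "sat \<rho> (Match x \<alpha>) \<longleftrightarrow> \<rho> x \<in> lang \<alpha>"
| "sat \<rho> (Or f g) \<longleftrightarrow> sat \<rho> f \<or> sat \<rho> g"
| "sat \<rho> (Not f) \<longleftrightarrow> \<not> sat \<rho> f"

fun fatoms :: "('v, 'a) sformula \<Rightarrow> 'a set" where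
  "fatoms (Match x \<alpha>) = set_rexp \<alpha>"
| "fatoms (Or f g) = fatoms f \<union> fatoms g"
| "fatoms (Not f) = fatoms f"

fun fvars :: "('v, 'a) sformula \<Rightarrow> 'v set" where
  "fvars (Match x \<alpha>) = {x}"
| "fvars (Or f g) = fvars f \<union> fvars g"
| "fvars (Not f) = fvars f"

definition scp :: "'v set \<Rightarrow> 'a set \<Rightarrow> ('v, 'a) sformula set \<Rightarrow> bool" where
  "scp X Sig F \<longleftrightarrow> finite X \<and> finite Sig \<and> finite F \<and>
     (\<forall>f\<in>F. fvars f \<subseteq> X \<and> fatoms f \<subseteq> Sig)"

text \<open>Assignments to X: maps from X to Sig^*. (Values outside X are irrelevant
  and fixed to [] to make the representation canonical.)\<close>
definition assignments :: "'v set \<Rightarrow> 'a set \<Rightarrow> ('v \<Rightarrow> 'a list) set" where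
  "assignments X Sig = {\<rho>. (\<forall>x\<in>X. set (\<rho> x) \<subseteq> Sig) \<and> (\<forall>x. x \<notin> X \<longrightarrow> \<rho> x = [])}"

definition sol :: "'v set \<Rightarrow> 'a set \<Rightarrow> ('v, 'a) sformula set \<Rightarrow> ('v \<Rightarrow> 'a list) set" where
  "sol X Sig F = {\<rho> \<in> assignments X Sig. \<forall>f\<in>F. sat \<rho> f}"

definition concat_assign :: "('v \<Rightarrow> 'a list) \<Rightarrow> ('v \<Rightarrow> 'a list) \<Rightarrow> ('v \<Rightarrow> 'a list)" where
  "concat_assign \<rho> \<rho>' = (\<lambda>x. \<rho> x @ \<rho>' x)"

definition valid_domain ::
  "'v set \<Rightarrow> 'a set \<Rightarrow> ('v, 'a) sformula set \<Rightarrow> ('v \<Rightarrow> 'a list) \<Rightarrow> 'v \<Rightarrow> 'a list set" where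
  "valid_domain X Sig F \<rho> x =
     {w. set w \<subseteq> Sig \<and> (\<exists>\<rho>' \<in> assignments X Sig. \<rho>' x = w \<and> concat_assign \<rho> \<rho>' \<in> sol X Sig F)}"

end

theory Submission
  imports Defs "HOL-Library.FuncSet"
begin

definition dq :: "'a list \<Rightarrow> 'a list set \<Rightarrow> 'a list set" where
  "dq u L = {w. u @ w \<in> L}"

definition fin :: "'a list set \<Rightarrow> bool" where
  "fin L \<longleftrightarrow> finite (range (\<lambda>u. dq u L))"

lemma dq_Nil[simp]: "dq [] L = L" by (simp add: dq_def)
lemma dq_app: "dq (u @ v) L = dq v (dq u L)" by (simp add: dq_def)

lemma star_append: "p \<in> star A \<Longrightarrow> z \<in> star A \<Longrightarrow> p @ z \<in> star A"
  by (induction rule: star.induct) (auto intro: star.intros)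

lemma reg_Un: "regular_over S A \<Longrightarrow> regular_over S B \<Longrightarrow> regular_over S (A \<union> B)"
  unfolding regular_over_def
  apply (elim exE)
  subgoal for r1 r2 by (rule exI[of _ "Plus r1 r2"]) auto
  done

lemma reg_conc: "regular_over S A \<Longrightarrow> regular_over S B \<Longrightarrow> regular_over S (conc A B)"
  unfolding regular_over_def
  apply (elim exE)
  subgoal for r1 r2 by (rule exI[of _ "Times r1 r2"]) auto
  done

lemma reg_star: "regular_over S A \<Longrightarrow> regular_over S (star A)"
  unfolding regular_over_def
  apply (elim exE)
  subgoal for r by (rule exI[of _ "Star r"]) simp
  done

lemma reg_empty: "regular_over S {}"
  unfolding regular_over_def by (rule exI[of _ Zero]) simp

lemma reg_word: "set w \<subseteq> S \<Longrightarrow> regular_over S {w}"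
proof (induction w)
  case Nil
  then show ?case unfolding regular_over_def by (intro exI[of _ One]) simp
next
  case (Cons a w)
  then obtain r where r: "set_rexp r \<subseteq> S" "lang r = {w}" unfolding regular_over_def by auto
  have "lang (Times (Atom a) r) = {a # w}" using r by (simp add: conc_def)
  moreover have "set_rexp (Times (Atom a) r) \<subseteq> S" using r Cons.prems by simp
  ultimately show ?case unfolding regular_over_def by blast
qed

lemma reg_finite: "finite W \<Longrightarrow> W \<subseteq> {w. set w \<subseteq> S} \<Longrightarrow> regular_over S W"
proof (induction rule: finite_induct)
  case empty
  then show ?case by (simp add: reg_empty)
next
  case (insert w W)
  then have "regular_over S ({w} \<union> W)" by (intro reg_Un reg_word) auto
  then show ?case by simp
qed

lemma reg_UN: "finite I \<Longrightarrow> (\<And>i. i \<in> I \<Longrightarrow> regular_over S (f i)) \<Longrightarrow> regular_over S (\<Union>i\<in>I. f i)"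
proof (induction rule: finite_induct)
  case empty
  then show ?case using reg_empty by simp
next
  case (insert i I)
  then show ?case by (simp add: reg_Un)
qed

definition P :: "'a set \<Rightarrow> 'a list set set \<Rightarrow> 'a list set \<Rightarrow> 'a list set \<Rightarrow> 'a list set" where
  "P Sig S q q' = {w. set w \<subseteq> Sig \<and> dq w q = q' \<and>
      (\<forall>n. 0 < n \<and> n < length w \<longrightarrow> dq (take n w) q \<in> S)}"

lemma P_mono: "S \<subseteq> S' \<Longrightarrow> P Sig S q q' \<subseteq> P Sig S' q q'"
  unfolding P_def by blast

lemma P_app:
  assumes "s \<in> S" "u \<in> P Sig S q s" "v \<in> P Sig S s q'"
  shows "u @ v \<in> P Sig S q q'"
proof -
  have u: "set u \<subseteq> Sig" "dq u q = s" "\<And>n. 0 < n \<Longrightarrow> n < length u \<Longrightarrow> dq (take n u) q \<in> S"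
    using assms(2) unfolding P_def by auto
  have v: "set v \<subseteq> Sig" "dq v s = q'" "\<And>n. 0 < n \<Longrightarrow> n < length v \<Longrightarrow> dq (take n v) s \<in> S"
    using assms(3) unfolding P_def by auto
  have "dq (take n (u @ v)) q \<in> S" if "0 < n" "n < length (u @ v)" for n
  proof (cases "n < length u")
    case True
    then show ?thesis using u(3) that by simp
  next
    case False
    show ?thesis
    proof (cases "n = length u")
      case True
      then show ?thesis using u(2) assms(1) by simp
    next
      case False
      then have "n > length u" using \<open>\<not> n < length u\<close> by simp
      then have "take n (u @ v) = u @ take (n - length u) v" by simp
      then show ?thesis using v(3)[of "n - length u"] that \<open>n > length u\<close> u(2)
        by (simp add: dq_app)
    qed
  qed
  then show ?thesis using u v unfolding P_def by (simp add: dq_app)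
qed

lemma P_star: "x \<in> star (P Sig S s s) \<Longrightarrow> s \<in> S \<Longrightarrow> x \<in> P Sig S s s"
proof (induction rule: star.induct)
  case star_Nil
  then show ?case unfolding P_def by simp
next
  case (star_app u v)
  then show ?case using P_app by blast
qed

lemma P_sub:
  "w \<in> P Sig (insert s S) q q' \<Longrightarrow>
     w \<in> P Sig S q q' \<union> conc (P Sig S q s) (conc (star (P Sig S s s)) (P Sig S s q'))"
proof (induction "length w" arbitrary: w q rule: less_induct)
  case less
  have w: "set w \<subseteq> Sig" "dq w q = q'"
    "\<And>n. 0 < n \<Longrightarrow> n < length w \<Longrightarrow> dq (take n w) q \<in> insert s S"
    using less.prems unfolding P_def by auto
  show ?case
  proof (cases "\<exists>n. 0 < n \<and> n < length w \<and> dq (take n w) q = s")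
    case False
    then have "w \<in> P Sig S q q'" using w unfolding P_def by blast
    then show ?thesis by simp
  next
    case True
    then obtain n where n: "0 < n \<and> n < length w \<and> dq (take n w) q = s"
      and nmin: "\<And>m. m < n \<Longrightarrow> \<not> (0 < m \<and> m < length w \<and> dq (take m w) q = s)"
      using exists_least_iff[of "\<lambda>n. 0 < n \<and> n < length w \<and> dq (take n w) q = s"] by blast
    define u where "u = take n w"
    define v where "v = drop n w"
    have uv: "w = u @ v" unfolding u_def v_def by simp
    have lu: "length u = n" using n unfolding u_def by simp
    have uP: "u \<in> P Sig S q s"
      unfolding P_def
    proof (intro CollectI conjI allI impI)
      show "set u \<subseteq> Sig" using w(1) uv by auto
      show "dq u q = s" using n u_def by simp
      fix m assume m: "0 < m \<and> m < length u"
      then have "take m u = take m w" unfolding u_def by simp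
      then show "dq (take m u) q \<in> S" using w(3)[of m] nmin[of m] m lu n by auto
    qed
    have vP: "v \<in> P Sig (insert s S) s q'"
      unfolding P_def
    proof (intro CollectI conjI allI impI)
      show "set v \<subseteq> Sig" using w(1) uv by auto
      show "dq v s = q'" using w(2) uv uP unfolding P_def
        by (auto simp: dq_app)
      fix m assume m: "0 < m \<and> m < length v"
      have "take (n + m) w = u @ take m v" using uv lu by simp
      then have "dq (take m v) s = dq (take (n + m) w) q" using uP unfolding P_def
        by (simp add: dq_app)
      then show "dq (take m v) s \<in> insert s S" using w(3)[of "n+m"] m uv lu by simp
    qed
    have "length v < length w" using n unfolding v_def by auto
    then have IH: "v \<in> P Sig S s q' \<union> conc (P Sig S s s) (conc (star (P Sig S s s)) (P Sig S s q'))"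
      using less.hyps vP by blast
    have "v \<in> conc (star (P Sig S s s)) (P Sig S s q')"
      using IH
    proof
      assume "v \<in> P Sig S s q'"
      then show ?thesis unfolding conc_def by (auto intro: exI[of _ "[]"] star.intros)
    next
      assume "v \<in> conc (P Sig S s s) (conc (star (P Sig S s s)) (P Sig S s q'))"
      then obtain a b c where "v = a @ b @ c" "a \<in> P Sig S s s" "b \<in> star (P Sig S s s)"
        "c \<in> P Sig S s q'" unfolding conc_def by blast
      then show ?thesis unfolding conc_def
        by (intro CollectI exI[of _ "a @ b"] exI[of _ c]) (auto intro: star.intros)
    qed
    then have "w \<in> conc (P Sig S q s) (conc (star (P Sig S s s)) (P Sig S s q'))"
      using uP uv unfolding conc_def by blast
    then show ?thesis by simp
  qed
qed

lemma P_insert: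
  "P Sig (insert s S) q q' = P Sig S q q' \<union> conc (P Sig S q s) (conc (star (P Sig S s s)) (P Sig S s q'))"
proof
  show "P Sig (insert s S) q q' \<subseteq> P Sig S q q' \<union> conc (P Sig S q s) (conc (star (P Sig S s s)) (P Sig S s q'))"
    by (rule subsetI) (rule P_sub)
next
  have m: "\<And>a b. P Sig S a b \<subseteq> P Sig (insert s S) a b" by (rule P_mono) blast
  show "P Sig S q q' \<union> conc (P Sig S q s) (conc (star (P Sig S s s)) (P Sig S s q')) \<subseteq> P Sig (insert s S) q q'"
  proof
    fix w assume "w \<in> P Sig S q q' \<union> conc (P Sig S q s) (conc (star (P Sig S s s)) (P Sig S s q'))"
    then show "w \<in> P Sig (insert s S) q q'"
    proof
      assume "w \<in> P Sig S q q'" then show ?thesis using m by blast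
    next
      assume "w \<in> conc (P Sig S q s) (conc (star (P Sig S s s)) (P Sig S s q'))"
      then obtain a b c where abc: "w = a @ b @ c" "a \<in> P Sig S q s" "b \<in> star (P Sig S s s)"
        "c \<in> P Sig S s q'" unfolding conc_def by blast
      have "star (P Sig S s s) \<subseteq> star (P Sig (insert s S) s s)"
      proof
        fix x assume "x \<in> star (P Sig S s s)"
        then show "x \<in> star (P Sig (insert s S) s s)"
          by (induction rule: star.induct) (use m in \<open>auto intro: star.intros\<close>)
      qed
      then have b: "b \<in> P Sig (insert s S) s s" using abc(3) P_star[where s=s and S="insert s S"] by blast
      have c: "c \<in> P Sig (insert s S) s q'" using abc(4) m by blast
      have a: "a \<in> P Sig (insert s S) q s" using abc(2) m by blast
      have "b @ c \<in> P Sig (insert s S) s q'" by (rule P_app[OF insertI1 b c])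
      from P_app[OF insertI1 a this] show ?thesis using abc(1) by simp
    qed
  qed
qed

lemma P_reg:
  assumes "finite Sig" "finite S"
  shows "regular_over Sig (P Sig S q q')"
  using assms(2)
proof (induction arbitrary: q q' rule: finite_induct)
  case empty
  have "P Sig {} q q' \<subseteq> {w. set w \<subseteq> Sig \<and> length w \<le> 1}"
    unfolding P_def
  proof clarify
    fix w assume h: "set w \<subseteq> Sig" "\<forall>n. 0 < n \<and> n < length w \<longrightarrow> dq (take n w) q \<in> {}"
    show "length w \<le> 1"
    proof (rule ccontr)
      assume "\<not> length w \<le> 1"
      then show False using h(2)[rule_format, of 1] by simp
    qed
  qed
  moreover have "finite {w. set w \<subseteq> Sig \<and> length w \<le> 1}"
    using finite_lists_length_le[OF assms(1)] by simp
  ultimately show ?case by (intro reg_finite) (auto intro: finite_subset simp: P_def)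
next
  case (insert s S)
  then show ?case by (simp add: P_insert reg_Un reg_conc reg_star)
qed

lemma fin_reg:
  assumes "finite Sig" "L \<subseteq> {w. set w \<subseteq> Sig}" "fin L"
  shows "regular_over Sig L"
proof -
  define Q where "Q = range (\<lambda>u. dq u L)"
  have fQ: "finite Q" using assms(3) unfolding fin_def Q_def .
  have "L = (\<Union>q'\<in>{q'\<in>Q. [] \<in> q'}. P Sig Q L q')"
  proof
    show "L \<subseteq> (\<Union>q'\<in>{q'\<in>Q. [] \<in> q'}. P Sig Q L q')"
    proof
      fix w assume "w \<in> L"
      then have "w \<in> P Sig Q L (dq w L)" "dq w L \<in> {q'\<in>Q. [] \<in> q'}"
        using assms(2) unfolding P_def Q_def dq_def by (auto simp: dq_app[symmetric])
      then show "w \<in> (\<Union>q'\<in>{q'\<in>Q. [] \<in> q'}. P Sig Q L q')" by blast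
    qed
  next
    show "(\<Union>q'\<in>{q'\<in>Q. [] \<in> q'}. P Sig Q L q') \<subseteq> L"
      unfolding P_def dq_def by auto
  qed
  moreover have "regular_over Sig (\<Union>q'\<in>{q'\<in>Q. [] \<in> q'}. P Sig Q L q')"
    using fQ assms(1) by (intro reg_UN P_reg) auto
  ultimately show ?thesis by simp
qed


lemma fin_finite:
  assumes "finite L" shows "fin L"
proof -
  define D where "D = (\<Union>w\<in>L. (\<lambda>n. drop n w) ` {..length w})"
  have fD: "finite D" unfolding D_def using assms by auto
  have "dq u L \<subseteq> D" for u
  proof
    fix v assume "v \<in> dq u L"
    then have "u @ v \<in> L" by (simp add: dq_def)
    moreover have "v = drop (length u) (u @ v)" by simp
    ultimately show "v \<in> D" unfolding D_def
      by (intro UN_I[of "u @ v"]) (auto intro!: image_eqI[of _ _ "length u"])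
  qed
  then have "range (\<lambda>u. dq u L) \<subseteq> Pow D" by auto
  then show ?thesis unfolding fin_def using fD using finite_subset finite_Pow_iff by metis
qed

lemma dq_Un: "dq u (A \<union> B) = dq u A \<union> dq u B" by (auto simp: dq_def)

lemma fin_Un: assumes "fin A" "fin B" shows "fin (A \<union> B)"
proof -
  have "range (\<lambda>u. dq u (A \<union> B)) \<subseteq> (\<lambda>(a, b). a \<union> b) ` (range (\<lambda>u. dq u A) \<times> range (\<lambda>u. dq u B))"
    by (auto simp: dq_Un)
  moreover have "finite (range (\<lambda>u. dq u A) \<times> range (\<lambda>u. dq u B))"
    using assms unfolding fin_def by simp
  ultimately show ?thesis unfolding fin_def using finite_subset finite_imageI by metis
qed

lemma dq_conc: "dq u (conc A B) = conc (dq u A) B \<union> \<Union> ((\<lambda>v. dq v B) ` {v. \<exists>p\<in>A. u = p @ v})"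
proof (rule set_eqI)
  fix w
  show "w \<in> dq u (conc A B) \<longleftrightarrow> w \<in> conc (dq u A) B \<union> \<Union> ((\<lambda>v. dq v B) ` {v. \<exists>p\<in>A. u = p @ v})"
  proof
    assume "w \<in> dq u (conc A B)"
    then obtain a b where ab: "u @ w = a @ b" "a \<in> A" "b \<in> B" by (auto simp: dq_def conc_def)
    then obtain us where "(u = a @ us \<and> us @ w = b) \<or> (u @ us = a \<and> w = us @ b)"
      by (auto simp: append_eq_append_conv2)
    then show "w \<in> conc (dq u A) B \<union> \<Union> ((\<lambda>v. dq v B) ` {v. \<exists>p\<in>A. u = p @ v})"
    proof
      assume h: "u = a @ us \<and> us @ w = b"
      then have "w \<in> dq us B" using ab by (simp add: dq_def)
      moreover have "us \<in> {v. \<exists>p\<in>A. u = p @ v}" using h ab by auto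
      ultimately show ?thesis by blast
    next
      assume h: "u @ us = a \<and> w = us @ b"
      then have "us \<in> dq u A" using ab by (simp add: dq_def)
      then show ?thesis using h ab unfolding conc_def by blast
    qed
  next
    assume "w \<in> conc (dq u A) B \<union> \<Union> ((\<lambda>v. dq v B) ` {v. \<exists>p\<in>A. u = p @ v})"
    then show "w \<in> dq u (conc A B)"
    proof
      assume "w \<in> conc (dq u A) B"
      then obtain a b where "w = a @ b" "u @ a \<in> A" "b \<in> B" by (auto simp: dq_def conc_def)
      then show ?thesis unfolding dq_def conc_def by (intro CollectI exI[of _ "u @ a"] exI[of _ b]) auto
    next
      assume "w \<in> \<Union> ((\<lambda>v. dq v B) ` {v. \<exists>p\<in>A. u = p @ v})"
      then obtain v p where "p \<in> A" "u = p @ v" "v @ w \<in> B" by (auto simp: dq_def)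
      then show ?thesis unfolding dq_def conc_def by (intro CollectI exI[of _ p] exI[of _ "v @ w"]) auto
    qed
  qed
qed

lemma fin_conc: assumes "fin A" "fin B" shows "fin (conc A B)"
proof -
  have "range (\<lambda>u. dq u (conc A B)) \<subseteq> (\<lambda>(a, S). conc a B \<union> \<Union> S) ` (range (\<lambda>u. dq u A) \<times> Pow (range (\<lambda>u. dq u B)))"
  proof
    fix x assume "x \<in> range (\<lambda>u. dq u (conc A B))"
    then obtain u where x: "x = dq u (conc A B)" by blast
    show "x \<in> (\<lambda>(a, S). conc a B \<union> \<Union> S) ` (range (\<lambda>u. dq u A) \<times> Pow (range (\<lambda>u. dq u B)))"
      unfolding x dq_conc
      by (rule image_eqI[of _ _ "(dq u A, (\<lambda>v. dq v B) ` {v. \<exists>p\<in>A. u = p @ v})"]) auto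
  qed
  moreover have "finite (range (\<lambda>u. dq u A) \<times> Pow (range (\<lambda>u. dq u B)))"
    using assms unfolding fin_def by simp
  ultimately show ?thesis unfolding fin_def using finite_subset finite_imageI by metis
qed

lemma star_split:
  "x \<in> star A \<Longrightarrow> x = u @ w \<Longrightarrow> u \<noteq> [] \<Longrightarrow>
    \<exists>p v. p \<in> star A \<and> u = p @ v \<and> w \<in> conc (dq v A) (star A)"
proof (induction arbitrary: u w rule: star.induct)
  case star_Nil
  then show ?case by simp
next
  case (star_app a y)
  from star_app.prems(1) obtain us where
    "(a = u @ us \<and> us @ y = w) \<or> (a @ us = u \<and> y = us @ w)"
    by (auto simp: append_eq_append_conv2)
  then show ?case
  proof
    assume h: "a = u @ us \<and> us @ y = w"
    have "w \<in> conc (dq u A) (star A)" using h star_app.hyps unfolding conc_def dq_def by auto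
    then show ?thesis by (intro exI[of _ "[]"] exI[of _ u]) (auto intro: star.intros)
  next
    assume h: "a @ us = u \<and> y = us @ w"
    show ?thesis
    proof (cases "us = []")
      case True
      then have "w \<in> conc (dq a A) (star A)" using h star_app.hyps unfolding conc_def dq_def
        by (intro CollectI exI[of _ "[]"] exI[of _ w]) auto
      then show ?thesis using h True by (intro exI[of _ "[]"] exI[of _ a]) (auto intro: star.intros)
    next
      case False
      then obtain p v where pv: "p \<in> star A" "us = p @ v" "w \<in> conc (dq v A) (star A)"
        using star_app.IH h by blast
      have "a @ p \<in> star A" using star_app.hyps(1) pv(1) by (rule star.intros)
      then show ?thesis using pv h by (intro exI[of _ "a @ p"] exI[of _ v]) auto
    qed
  qed
qed

lemma dq_star: "u \<noteq> [] \<Longrightarrow> dq u (star A) = \<Union> ((\<lambda>v. conc (dq v A) (star A)) ` {v. \<exists>p\<in>star A. u = p @ v})"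
proof (rule set_eqI)
  fix w assume u: "u \<noteq> []"
  show "w \<in> dq u (star A) \<longleftrightarrow> w \<in> \<Union> ((\<lambda>v. conc (dq v A) (star A)) ` {v. \<exists>p\<in>star A. u = p @ v})"
  proof
    assume "w \<in> dq u (star A)"
    then have "u @ w \<in> star A" by (simp add: dq_def)
    then obtain p v where "p \<in> star A" "u = p @ v" "w \<in> conc (dq v A) (star A)"
      using star_split[of "u @ w" A u w] u by blast
    then show "w \<in> \<Union> ((\<lambda>v. conc (dq v A) (star A)) ` {v. \<exists>p\<in>star A. u = p @ v})"
      by blast
  next
    assume "w \<in> \<Union> ((\<lambda>v. conc (dq v A) (star A)) ` {v. \<exists>p\<in>star A. u = p @ v})"
    then obtain v p r y where h: "p \<in> star A" "u = p @ v" "w = r @ y" "v @ r \<in> A" "y \<in> star A"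
      by (auto simp: conc_def dq_def)
    have "(v @ r) @ y \<in> star A" using h(4,5) by (rule star.intros)
    then have "p @ (v @ r) @ y \<in> star A" using h(1) star_append by blast
    then show "w \<in> dq u (star A)" using h by (simp add: dq_def)
  qed
qed

lemma fin_star: assumes "fin A" shows "fin (star A)"
proof -
  have "range (\<lambda>u. dq u (star A)) \<subseteq> insert (star A) ((\<lambda>S. \<Union> ((\<lambda>a. conc a (star A)) ` S)) ` Pow (range (\<lambda>u. dq u A)))"
  proof
    fix x assume "x \<in> range (\<lambda>u. dq u (star A))"
    then obtain u where x: "x = dq u (star A)" by blast
    show "x \<in> insert (star A) ((\<lambda>S. \<Union> ((\<lambda>a. conc a (star A)) ` S)) ` Pow (range (\<lambda>u. dq u A)))"
    proof (cases "u = []")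
      case True
      then show ?thesis using x by simp
    next
      case False
      have "x = \<Union> ((\<lambda>a. conc a (star A)) ` ((\<lambda>v. dq v A) ` {v. \<exists>p\<in>star A. u = p @ v}))"
        unfolding x dq_star[OF False] by (simp add: image_image)
      then show ?thesis by blast
    qed
  qed
  moreover have "finite (Pow (range (\<lambda>u. dq u A)))"
    using assms unfolding fin_def by simp
  then have "finite (insert (star A) ((\<lambda>S. \<Union> ((\<lambda>a. conc a (star A)) ` S)) ` Pow (range (\<lambda>u. dq u A))))"
    by simp
  ultimately show ?thesis unfolding fin_def by (rule finite_subset)
qed

lemma fin_lang: "fin (lang r)"
  by (induction r) (auto intro: fin_finite fin_Un fin_conc fin_star)

lemma fin_inv:
  assumes fK: "finite K" and KA: "\<And>A. A \<in> K \<Longrightarrow> fin A"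
    and VS: "V \<subseteq> {w. set w \<subseteq> Sig}"
    and inv: "\<And>w1 w2. set w1 \<subseteq> Sig \<Longrightarrow> set w2 \<subseteq> Sig \<Longrightarrow> (\<forall>A\<in>K. w1 \<in> A \<longleftrightarrow> w2 \<in> A) \<Longrightarrow> w1 \<in> V \<Longrightarrow> w2 \<in> V"
  shows "fin V"
proof -
  define U where "U = {w. set w \<subseteq> Sig}"
  define g where "g u = restrict (\<lambda>A. dq u A) K" for u
  have key: "dq u1 V = dq u2 V" if "u1 \<in> U" "u2 \<in> U" "g u1 = g u2" for u1 u2
  proof -
    have eqA: "dq u1 A = dq u2 A" if "A \<in> K" for A
      using fun_cong[OF \<open>g u1 = g u2\<close>, of A] that unfolding g_def by simp
    show ?thesis
    proof (rule set_eqI)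
      fix w
      show "w \<in> dq u1 V \<longleftrightarrow> w \<in> dq u2 V"
      proof (cases "set w \<subseteq> Sig")
        case True
        have s1: "set (u1 @ w) \<subseteq> Sig" "set (u2 @ w) \<subseteq> Sig" using True that(1,2) unfolding U_def by auto
        have "\<forall>A\<in>K. u1 @ w \<in> A \<longleftrightarrow> u2 @ w \<in> A"
          using eqA unfolding dq_def by blast
        then show ?thesis using inv[OF s1(1) s1(2)] inv[OF s1(2) s1(1)] unfolding dq_def by blast
      next
        case False
        have "u @ w \<notin> V" for u
        proof
          assume "u @ w \<in> V"
          then have "set (u @ w) \<subseteq> Sig" using VS by blast
          then show False using False by simp
        qed
        then show ?thesis unfolding dq_def by simp
      qed
    qed
  qed
  have "range (\<lambda>u. dq u V) \<subseteq> insert {} ((\<lambda>h. dq (SOME u. u \<in> U \<and> g u = h) V) ` (g ` U))"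
  proof
    fix x assume "x \<in> range (\<lambda>u. dq u V)"
    then obtain u where x: "x = dq u V" by blast
    show "x \<in> insert {} ((\<lambda>h. dq (SOME u. u \<in> U \<and> g u = h) V) ` (g ` U))"
    proof (cases "u \<in> U")
      case False
      have "u @ w \<notin> V" for w
      proof
        assume "u @ w \<in> V"
        then have "set (u @ w) \<subseteq> Sig" using VS by blast
        then show False using False unfolding U_def by simp
      qed
      then have "x = {}" unfolding x dq_def by simp
      then show ?thesis by simp
    next
      case True
      have "\<exists>u'. u' \<in> U \<and> g u' = g u" using True by blast
      then have "(SOME u'. u' \<in> U \<and> g u' = g u) \<in> U \<and> g (SOME u'. u' \<in> U \<and> g u' = g u) = g u"
        by (rule someI_ex)
      then have "x = dq (SOME u'. u' \<in> U \<and> g u' = g u) V" unfolding x using key[OF True] by simp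
      then show ?thesis using True by blast
    qed
  qed
  moreover have gs: "g ` U \<subseteq> PiE K (\<lambda>A. range (\<lambda>u. dq u A))"
    unfolding g_def by auto
  moreover have fP: "finite (PiE K (\<lambda>A. range (\<lambda>u. dq u A)))"
    using fK KA unfolding fin_def by (intro finite_PiE) auto
  ultimately have "finite (g ` U)" using finite_subset[OF gs fP] by simp
  then have "finite (insert {} ((\<lambda>h. dq (SOME u. u \<in> U \<and> g u = h) V) ` (g ` U)))" by simp
  then show ?thesis unfolding fin_def using \<open>range (\<lambda>u. dq u V) \<subseteq> _\<close> by (rule finite_subset[rotated])
qed

fun matoms :: "('v, 'a) sformula \<Rightarrow> ('v \<times> 'a rexp) set" where
  "matoms (Match x \<alpha>) = {(x, \<alpha>)}"
| "matoms (Or f g) = matoms f \<union> matoms g"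
| "matoms (Not f) = matoms f"

lemma finite_matoms: "finite (matoms f)"
  by (induction f) auto

lemma sat_inv:
  assumes "\<And>\<alpha>. (x, \<alpha>) \<in> matoms f \<Longrightarrow> (\<rho> x @ w1 \<in> lang \<alpha> \<longleftrightarrow> \<rho> x @ w2 \<in> lang \<alpha>)"
  shows "sat (concat_assign \<rho> (\<rho>'(x := w1))) f \<longleftrightarrow> sat (concat_assign \<rho> (\<rho>'(x := w2))) f"
  using assms by (induction f) (auto simp: concat_assign_def)

theorem theorem1:
  fixes X :: "'v set" and Sig :: "'a set" and F :: "('v, 'a) sformula set"
  assumes "scp X Sig F"
    and "x \<in> X"
    and "\<rho> \<in> assignments X Sig"
  shows "regular_over Sig (valid_domain X Sig F \<rho> x)"
proof -
  define V where "V = valid_domain X Sig F \<rho> x"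
  have fSig: "finite Sig" and fF: "finite F" using assms(1) unfolding scp_def by auto
  define As where "As = {\<alpha>. \<exists>f\<in>F. (x, \<alpha>) \<in> matoms f}"
  have "As \<subseteq> snd ` (\<Union>f\<in>F. matoms f)"
  proof
    fix \<alpha> assume "\<alpha> \<in> As"
    then obtain f where "f \<in> F" "(x, \<alpha>) \<in> matoms f" unfolding As_def by blast
    then show "\<alpha> \<in> snd ` (\<Union>f\<in>F. matoms f)" by (intro image_eqI[of _ snd "(x, \<alpha>)"]) auto
  qed
  moreover have "finite (snd ` (\<Union>f\<in>F. matoms f))"
    using fF finite_matoms by (intro finite_imageI finite_UN_I) auto
  ultimately have fAs: "finite As" by (rule finite_subset)
  define K where "K = (\<lambda>\<alpha>. dq (\<rho> x) (lang \<alpha>)) ` As"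
  have VS: "V \<subseteq> {w. set w \<subseteq> Sig}" unfolding V_def valid_domain_def by auto
  have "fin V"
  proof (rule fin_inv[of K V Sig])
    show "finite K" unfolding K_def using fAs by simp
  next
    fix A assume "A \<in> K"
    then obtain \<alpha> where A: "A = dq (\<rho> x) (lang \<alpha>)" unfolding K_def by blast
    have "range (\<lambda>u. dq u A) \<subseteq> range (\<lambda>u. dq u (lang \<alpha>))"
    proof
      fix y assume "y \<in> range (\<lambda>u. dq u A)"
      then obtain u where "y = dq u A" by blast
      then have "y = dq (\<rho> x @ u) (lang \<alpha>)" unfolding A by (simp add: dq_app)
      then show "y \<in> range (\<lambda>u. dq u (lang \<alpha>))" by (rule range_eqI)
    qed
    then show "fin A" using fin_lang[of \<alpha>] unfolding fin_def by (rule finite_subset)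
  next
    show "V \<subseteq> {w. set w \<subseteq> Sig}" by (rule VS)
  next
    fix w1 w2 assume w1S: "set w1 \<subseteq> Sig" and w2S: "set w2 \<subseteq> Sig"
      and agree: "\<forall>A\<in>K. w1 \<in> A \<longleftrightarrow> w2 \<in> A" and "w1 \<in> V"
    then obtain \<rho>' where r': "\<rho>' \<in> assignments X Sig" "\<rho>' x = w1" "concat_assign \<rho> \<rho>' \<in> sol X Sig F"
      unfolding V_def valid_domain_def by blast
    have eq1: "\<rho>'(x := w1) = \<rho>'" using r'(2) by auto
    have a2: "\<rho>'(x := w2) \<in> assignments X Sig" using r'(1) w2S assms(2) unfolding assignments_def
      by (simp add: fun_upd_def)
    have ca2: "concat_assign \<rho> (\<rho>'(x := w2)) \<in> assignments X Sig"
      using a2 assms(3) unfolding assignments_def concat_assign_def by auto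
    have "sat (concat_assign \<rho> (\<rho>'(x := w2))) f" if "f \<in> F" for f
    proof -
      have "sat (concat_assign \<rho> \<rho>') f" using r'(3) that unfolding sol_def by blast
      then have "sat (concat_assign \<rho> (\<rho>'(x := w1))) f" using eq1 by simp
      moreover have ag: "(\<rho> x @ w1 \<in> lang \<alpha> \<longleftrightarrow> \<rho> x @ w2 \<in> lang \<alpha>)" if "(x, \<alpha>) \<in> matoms f" for \<alpha>
      proof -
        have "\<alpha> \<in> As" unfolding As_def using that \<open>f \<in> F\<close> by blast
        then have "dq (\<rho> x) (lang \<alpha>) \<in> K" unfolding K_def by (rule imageI)
        from bspec[OF agree this] show ?thesis by (simp add: dq_def)
      qed
      have "sat (concat_assign \<rho> (\<rho>'(x := w1))) f \<longleftrightarrow> sat (concat_assign \<rho> (\<rho>'(x := w2))) f"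
        by (rule sat_inv) (rule ag)
      ultimately show ?thesis by simp
    qed
    then have "concat_assign \<rho> (\<rho>'(x := w2)) \<in> sol X Sig F" using ca2 unfolding sol_def by blast
    then show "w2 \<in> V" unfolding V_def valid_domain_def using a2 w2S
      by (intro CollectI conjI bexI[of _ "\<rho>'(x := w2)"]) simp_all
  qed
  then show ?thesis using fin_reg[OF fSig VS] unfolding V_def by simp
qed

end
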